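(* Let $\kappa\ge 3$ and $n\ge 1$ be integers, $r=\lfloor(\kappa-2)/2\rfloor$, $r'=\lceil(\kappa-2)/2\rceil$, and let $F$ be a field. Let $p=(p_m)_{m\in\mathbb Z}$, $q=(q_m)_{m\in\mathbb Z}$ be $n$-periodic sequences in $F$, and write $(p^{(k)},q^{(k)})=\Phi^k(p,q)$ for $k\in\mathbb Z$, where $\Phi$ is the map defined below; assume all these iterates are defined (no division by zero occurs). Let $Y:\{(i,j,k)\in\mathbb Z^3: i+j+k\equiv 0 \bmod 2\}\to F\setminus\{0,-1\}$ satisfy the $Y$-system $$Y_{i,j,k+1}Y_{i,j,k-1}=\frac{(1+Y_{i+1,j,k})(1+Y_{i-1,j,k})}{(1+Y_{i,j+1,k}^{-1})(1+Y_{i,j-1,k}^{-1})}\quad\text{for all }(i,j,k)\text{ with } i+j+k\text{ odd},$$ with initial conditions $$Y_{i,j,-1}=\Big(q_{((\kappa-2)i+\kappa j+r-r')/2}\Big)^{-1}\ (i+j\text{ odd}),\qquad Y_{i,j,0}=p_{((\kappa-2)i+\kappa j)/2}\ (i+j\text{ even}).$$ Then for all $i,j,k\in\mathbb Z$: $$p^{(k)}_{((\kappa-2)i+\kappa j+k(r-r'))/2}=Y_{i,j,k}\quad\text{if } i+j+k\equiv 0\bmod 2,$$ $$q^{(k)}_{((\kappa-2)i+\kappa j+(k+1)(r-r'))/2}=Y_{i,j,k-1}^{-1}\quad\text{if } i+j+k\equiv 1\bmod 2.$$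
   Context: The map $\Phi$ (the higher pentagram map $T_\kappa$ written in the $(p,q)$ coordinates of twisted $n$-gons) sends a pair of $n$-periodic sequences $(p,q)$ to $(p',q')$ with $$q'_m=p_{m+r'-r}^{-1},\qquad p'_m=q_m\,\frac{(1+p_{m-r})(1+p_{m+r'})}{(1+p_{m-r-1}^{-1})(1+p_{m+r'+1}^{-1})}.$$ $\Phi$ is invertible where defined (one recovers $p$ from $q'$ and then $q$ from $p'$), and for $k<0$, $\Phi^k$ denotes the $|k|$-fold iterate of $\Phi^{-1}$. All subscripts appearing are integers. *)

theory Defs
  imports Complex_Main
begin

definition rlo :: "int \<Rightarrow> int" where
  "rlo \<kappa> = \<lfloor>real_of_int (\<kappa> - 2) / 2\<rfloor>"

definition rhi :: "int \<Rightarrow> int" where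
  "rhi \<kappa> = \<lceil>real_of_int (\<kappa> - 2) / 2\<rceil>"

type_synonym 'a seqpair = "(int \<Rightarrow> 'a) \<times> (int \<Rightarrow> 'a)"

definition Phi :: "int \<Rightarrow> 'a::field seqpair \<Rightarrow> 'a seqpair" where
  "Phi \<kappa> pq = (let p = fst pq; q = snd pq; r = rlo \<kappa>; r' = rhi \<kappa> in
     (\<lambda>m. q m * ((1 + p (m - r)) * (1 + p (m + r')))
                / ((1 + inverse (p (m - r - 1))) * (1 + inverse (p (m + r' + 1)))),
      \<lambda>m. inverse (p (m + r' - r))))"

definition Phi_defined :: "int \<Rightarrow> 'a::field seqpair \<Rightarrow> bool" where
  "Phi_defined \<kappa> pq = (let p = fst pq; r = rlo \<kappa>; r' = rhi \<kappa> in
     (\<forall>m. p m \<noteq> 0) \<and>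
     (\<forall>m. (1 + inverse (p (m - r - 1))) * (1 + inverse (p (m + r' + 1))) \<noteq> 0))"

definition is_Phi_orbit :: "int \<Rightarrow> (int \<Rightarrow> 'a::field seqpair) \<Rightarrow> bool" where
  "is_Phi_orbit \<kappa> X = (\<forall>k. Phi_defined \<kappa> (X k) \<and> X (k + 1) = Phi \<kappa> (X k))"

end

theory Submission
  imports Defs
begin

lemma rlo_eq: "rlo k = (k - 2) div 2"
  using floor_divide_of_int_eq[of "k-2" 2] unfolding rlo_def by simp
lemma rhi_eq: "rhi k = - ((2 - k) div 2)"
proof -
  have "- (real_of_int (k - 2) / 2) = real_of_int (2-k) / real_of_int 2" by (simp add: field_simps)
  then show ?thesis unfolding rhi_def ceiling_def using floor_divide_of_int_eq[of "2-k" 2]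
    by metis
qed
lemma rfacts: "rlo k + rhi k = k - 2" "rlo k - rhi k = 0 \<or> rlo k - rhi k = -1"
  "even k \<longleftrightarrow> rlo k - rhi k = 0"
  unfolding rlo_eq rhi_eq by presburger+
lemma par: fixes k::int assumes "even (i+j+m)" "d = rlo k - rhi k"
  shows "even ((k-2)*i + k*j + m*d)"
proof (cases "even k")
  case True then have "d = 0" using rfacts assms by auto
  with True show ?thesis by simp
next
  case False then have "d = -1" using rfacts assms by auto
  with False assms(1) show ?thesis by simp
qed

theorem mainTheorem1:
  fixes \<kappa> :: int and n :: int
    and p q :: "int \<Rightarrow> 'a::field"
    and X :: "int \<Rightarrow> 'a seqpair"
    and Y :: "int \<Rightarrow> int \<Rightarrow> int \<Rightarrow> 'a"
  assumes "\<kappa> \<ge> 3" and "n \<ge> 1"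
    and "\<forall>m. p (m + n) = p m" and "\<forall>m. q (m + n) = q m"
    and "X 0 = (p, q)"
    and "is_Phi_orbit \<kappa> X"
    and "\<forall>i j k. even (i + j + k) \<longrightarrow> Y i j k \<noteq> 0 \<and> Y i j k \<noteq> -1"
    and "\<forall>i j k. odd (i + j + k) \<longrightarrow>
           Y i j (k + 1) * Y i j (k - 1) =
           ((1 + Y (i + 1) j k) * (1 + Y (i - 1) j k)) /
           ((1 + inverse (Y i (j + 1) k)) * (1 + inverse (Y i (j - 1) k)))"
    and "\<forall>i j. odd (i + j) \<longrightarrow>
           Y i j (-1) = inverse (q (((\<kappa> - 2) * i + \<kappa> * j + rlo \<kappa> - rhi \<kappa>) div 2))"
    and "\<forall>i j. even (i + j) \<longrightarrow>
           Y i j 0 = p (((\<kappa> - 2) * i + \<kappa> * j) div 2)"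
  shows "\<forall>i j k.
     (even (i + j + k) \<longrightarrow>
        fst (X k) (((\<kappa> - 2) * i + \<kappa> * j + k * (rlo \<kappa> - rhi \<kappa>)) div 2) = Y i j k) \<and>
     (odd (i + j + k) \<longrightarrow>
        snd (X k) (((\<kappa> - 2) * i + \<kappa> * j + (k + 1) * (rlo \<kappa> - rhi \<kappa>)) div 2)
          = inverse (Y i j (k - 1)))"
  proof -
  note A = assms
  define d where "d = rlo \<kappa> - rhi \<kappa>"
  define I where "I i j k = ((\<kappa> - 2) * i + \<kappa> * j + k * d) div 2" for i j k :: int
  have rs: "rlo \<kappa> + rhi \<kappa> = \<kappa> - 2" using rfacts by blast
  have I2: "2 * I i j k = (\<kappa> - 2) * i + \<kappa> * j + k * d" if "even (i+j+k)" for i j k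
    using par[OF that d_def] unfolding I_def by simp
  have ix1: "I (i+1) j k = I i j (k+1) + rhi \<kappa>" if "odd (i+j+k)" for i j k
  proof -
    have "2 * I (i+1) j k = 2 * (I i j (k+1) + rhi \<kappa>)"
      using I2[of "i+1" j k] I2[of i j "k+1"] that rs unfolding d_def
      by (simp add: algebra_simps)
    then show ?thesis by simp
  qed
  have ix2: "I (i-1) j k = I i j (k+1) - rlo \<kappa>" if "odd (i+j+k)" for i j k
  proof -
    have "2 * I (i-1) j k = 2 * (I i j (k+1) - rlo \<kappa>)"
      using I2[of "i-1" j k] I2[of i j "k+1"] that rs unfolding d_def
      by (simp add: algebra_simps)
    then show ?thesis by simp
  qed
  have ix3: "I i (j+1) k = I i j (k+1) + rhi \<kappa> + 1" if "odd (i+j+k)" for i j k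
  proof -
    have "2 * I i (j+1) k = 2 * (I i j (k+1) + rhi \<kappa> + 1)"
      using I2[of i "j+1" k] I2[of i j "k+1"] that rs unfolding d_def
      by (simp add: algebra_simps)
    then show ?thesis by simp
  qed
  have ix4: "I i (j-1) k = I i j (k+1) - rlo \<kappa> - 1" if "odd (i+j+k)" for i j k
  proof -
    have "2 * I i (j-1) k = 2 * (I i j (k+1) - rlo \<kappa> - 1)"
      using I2[of i "j-1" k] I2[of i j "k+1"] that rs unfolding d_def
      by (simp add: algebra_simps)
    then show ?thesis by simp
  qed
  have ix5: "I i j (k+2) + rhi \<kappa> - rlo \<kappa> = I i j k" if "even (i+j+k)" for i j k
  proof -
    have "2 * (I i j (k+2) + rhi \<kappa> - rlo \<kappa>) = 2 * I i j k"
      using I2[of i j "k+2"] I2[of i j k] that unfolding d_def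
      by (simp add: algebra_simps)
    then show ?thesis by simp
  qed
  have orb: "Phi_defined \<kappa> (X k) \<and> X (k + 1) = Phi \<kappa> (X k)" for k
    using A(6) unfolding is_Phi_orbit_def by blast
  have fstX: "fst (X (k+1)) m = snd (X k) m * ((1 + fst (X k) (m - rlo \<kappa>)) * (1 + fst (X k) (m + rhi \<kappa>)))
      / ((1 + inverse (fst (X k) (m - rlo \<kappa> - 1))) * (1 + inverse (fst (X k) (m + rhi \<kappa> + 1))))" for k m
    using orb[of k] unfolding Phi_def Let_def by simp
  have sndX: "snd (X (k+1)) m = inverse (fst (X k) (m + rhi \<kappa> - rlo \<kappa>))" for k m
    using orb[of k] unfolding Phi_def Let_def by simp
  have Ynz: "Y i j k \<noteq> 0" if "even (i+j+k)" for i j k using A(7) that by blast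
  have Ysys: "Y i j (k + 1) * Y i j (k - 1) =
           ((1 + Y (i + 1) j k) * (1 + Y (i - 1) j k)) /
           ((1 + inverse (Y i (j + 1) k)) * (1 + inverse (Y i (j - 1) k)))" if "odd (i+j+k)" for i j k
    using A(8) that by blast
  define S where "S k = ((\<forall>i j. even (i+j+k) \<longrightarrow> fst (X k) (I i j k) = Y i j k) \<and>
     (\<forall>i j. odd (i+j+k) \<longrightarrow> snd (X k) (I i j (k+1)) = inverse (Y i j (k-1))))" for k
  have S0: "S 0"
  proof -
    have "(\<kappa> - 2) * i + \<kappa> * j + rlo \<kappa> - rhi \<kappa> = (\<kappa> - 2) * i + \<kappa> * j + (0+1) * d" for i j
      unfolding d_def by simp
    then show ?thesis unfolding S_def I_def using A(5) A(9) A(10) by (simp add: d_def add_diff_eq)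
  qed
  have Sf: "S (k+1)" if "S k" for k
  proof -
    have a: "fst (X k) (I i j k) = Y i j k" if "even (i+j+k)" for i j
      using \<open>S k\<close> that unfolding S_def by blast
    have b: "snd (X k) (I i j (k+1)) = inverse (Y i j (k-1))" if "odd (i+j+k)" for i j
      using \<open>S k\<close> that unfolding S_def by blast
    have A1: "fst (X (k+1)) (I i j (k+1)) = Y i j (k+1)" if "even (i+j+(k+1))" for i j
    proof -
      have o: "odd (i+j+k)" using that by presburger
      have e1: "even ((i+1)+j+k)" "even ((i-1)+j+k)" "even (i+(j+1)+k)" "even (i+(j-1)+k)"
        "even (i+j+(k-1))" using o by presburger+
      have "fst (X (k+1)) (I i j (k+1)) = inverse (Y i j (k-1)) * (Y i j (k + 1) * Y i j (k - 1))"
        using fstX[of k "I i j (k+1)"] b[OF o] a[OF e1(1)] a[OF e1(2)] a[OF e1(3)] a[OF e1(4)]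
          ix1[OF o] ix2[OF o] ix3[OF o] ix4[OF o] Ysys[OF o] by (simp add: ac_simps)
      also have "\<dots> = Y i j (k+1)" using Ynz[OF e1(5)] by simp
      finally show ?thesis .
    qed
    have B1: "snd (X (k+1)) (I i j (k+1+1)) = inverse (Y i j (k+1-1))" if "odd (i+j+(k+1))" for i j
    proof -
      have e: "even (i+j+k)" using that by presburger
      have "snd (X (k+1)) (I i j (k+2)) = inverse (Y i j k)"
        using sndX[of k "I i j (k+2)"] ix5[OF e] a[OF e] by simp
      then show ?thesis by (simp add: add.assoc)
    qed
    show ?thesis unfolding S_def using A1 B1 by blast
  qed
  have Sb: "S k" if "S (k+1)" for k
  proof -
    have a: "fst (X (k+1)) (I i j (k+1)) = Y i j (k+1)" if "even (i+j+(k+1))" for i j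
      using \<open>S (k+1)\<close> that unfolding S_def by blast
    have b: "snd (X (k+1)) (I i j (k+1+1)) = inverse (Y i j (k+1-1))" if "odd (i+j+(k+1))" for i j
      using \<open>S (k+1)\<close> that unfolding S_def by blast
    have A0: "fst (X k) (I i j k) = Y i j k" if e: "even (i+j+k)" for i j
    proof -
      have o: "odd (i+j+(k+1))" using e by presburger
      have "inverse (fst (X k) (I i j k)) = inverse (Y i j k)"
        using b[OF o] sndX[of k "I i j (k+2)"] ix5[OF e] by (simp add: add.assoc)
      then show ?thesis by simp
    qed
    have B0: "snd (X k) (I i j (k+1)) = inverse (Y i j (k-1))" if o: "odd (i+j+k)" for i j
    proof -
      have e1: "even ((i+1)+j+k)" "even ((i-1)+j+k)" "even (i+(j+1)+k)" "even (i+(j-1)+k)"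
        "even (i+j+(k-1))" "even (i+j+(k+1))" using o by presburger+
      have "Y i j (k+1) = snd (X k) (I i j (k+1)) * (Y i j (k + 1) * Y i j (k - 1))"
        using fstX[of k "I i j (k+1)"] a[OF e1(6)] A0[OF e1(1)] A0[OF e1(2)] A0[OF e1(3)] A0[OF e1(4)]
          ix1[OF o] ix2[OF o] ix3[OF o] ix4[OF o] Ysys[OF o] by (simp add: ac_simps)
      then have "Y i j (k+1) * 1 = Y i j (k+1) * (snd (X k) (I i j (k+1)) * Y i j (k - 1))"
        by (simp add: algebra_simps)
      then have "1 = snd (X k) (I i j (k+1)) * Y i j (k - 1)"
        using Ynz[OF e1(6)] by (metis mult_left_cancel)
      then show ?thesis using Ynz[OF e1(5)] by (simp add: field_simps)
    qed
    show ?thesis unfolding S_def using A0 B0 by blast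
  qed
  have all: "S k" for k
  proof (induction k rule: int_induct[where k=0])
    case base show ?case by (rule S0)
  next
    case (step1 i) then show ?case using Sf by blast
  next
    case (step2 i) then show ?case using Sb[of "i-1"] by simp
  qed
  show ?thesis using all unfolding S_def I_def d_def by blast
qed

end
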